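(* Let $n\ge 2$ and consider \textsc{LOTZ}. Let $\mathrm{score}(x,P)$ be any diversity measure that is diversity-favouring on $\{0,1\}^n\setminus\{0^n,1^n\}$ with respect to \textsc{LOTZ} (for example HVC with a reference point $(r_1,r_2)$, $r_1\le-1$, $r_2\le-1$, or CDC). Consider the modified GSEMO with diversity-based parent selection using this measure. Then the expected time to find the whole Pareto front of \textsc{LOTZ} is $O(n^2)$ for the exponential and power law ranking schemes and for tournament selection with tournament size $\mu$, and $O(n^2\log n)$ for the harmonic ranking scheme.
   Context: Search space $\{0,1\}^n$; objectives maximised. $\textsc{LOTZ}(x)=(\mathrm{LO}(x),\mathrm{TZ}(x))$, where $\mathrm{LO}(x)$ is the number of leading ones and $\mathrm{TZ}(x)$ the number of trailing zeros of $x$. Dominance: $y$ dominates $x$ if $f_i(y)\ge f_i(x)$ for all $i$ and strictly for some $i$; weakly dominates if $f_i(y)\ge f_i(x)$ for all $i$. Pareto set $X^*=\{1^i0^{n-i}:0\le i\le n\}$, Pareto front $F^*=f(X^* )$. Modified GSEMO with diversity-based parent selection: let $\mathrm{L}(x)=\mathrm{LO}(x)+\mathrm{TZ}(x)$. Choose $s$ uniformly at random, $P=\{s\}$. In each iteration: let $P'\subseteq P$ be the set of all points of $P$ with maximum $\mathrm{L}$-value; compute $\mathrm{score}(x,P')$ for all $x\in P'$ (with respect to the population $P'$); choose a parent $s\in P'$ according to the parent selection mechanism (applied to $P'$, with $\mu=|P'|$); create $s'$ by flipping each bit of $s$ independently with probability $1/n$; if $s'$ is not dominated by any member of $P$, add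 it to $P$ and remove all members of $P$ weakly dominated by $s'$. Time = number of iterations until $f(P)=F^*$. Good: w.r.t. population $P$, $x\in P\cap X^*$ is good if some Hamming neighbour $y$ of $x$ satisfies $y\in X^*$ and $f(y)\notin f(P)$; otherwise bad. Diversity-favouring on $S$: for every population $P$ and all $x,y\in P\cap X^*\cap S$, $x$ bad and $y$ good imply $\mathrm{score}(x,P)<\mathrm{score}(y,P)$. HVC with reference point $(r_1,r_2)$: sort population by increasing $f_1$ as $x_1,\dots,x_\mu$, set $f_1(x_0)=r_1$, $f_2(x_{\mu+1})=r_2$, $\mathrm{HVC}(x_i,P)=(f_1(x_i)-f_1(x_{i-1}))(f_2(x_i)-f_2(x_{i+1}))$. CDC: each point starts at 0; for each objective $m$, sort ascending by $f_m$, boundary points get $\infty$, intermediate $P[i]$ gets $+(f_m(P[i+1])-f_m(P[i-1]))/(f_m^{\max}-f_m^{\min})$ ($f_m^{\max},f_m^{\min}$ max and min values of objective $m$). Parent selection: sort by non-increasing score; $i$-th ranked chosen with probability $2^{-i}/\sum_{j=1}^\mu2^{-j}$ (exponential), $i^{-2}/\sum_{j=1}^\mu j^{-2}$ (power law), $i^{-1}/\sum_{j=1}^\mu j^{-1}$ (harmonic); tournament of size $\mu$: draw $\mu$ individuals uniformly with replacement, select the one with highest score. *)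

theory Defs
  imports "HOL-Probability.Probability"
begin

(* Bit strings of length n are represented as bool lists; True = 1, False = 0. *)

definition LO :: "bool list \<Rightarrow> nat" where
  "LO x = length (takeWhile (\<lambda>b. b) x)"

definition TZ :: "bool list \<Rightarrow> nat" where
  "TZ x = length (takeWhile (\<lambda>b. \<not> b) (rev x))"

definition fobj :: "bool list \<Rightarrow> nat \<times> nat" where
  "fobj x = (LO x, TZ x)"

definition weakly_dom :: "bool list \<Rightarrow> bool list \<Rightarrow> bool" where
  "weakly_dom y x \<longleftrightarrow> LO y \<ge> LO x \<and> TZ y \<ge> TZ x"

definition dominates :: "bool list \<Rightarrow> bool list \<Rightarrow> bool" where
  "dominates y x \<longleftrightarrow> weakly_dom y x \<and> (LO y > LO x \<or> TZ y > TZ x)"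

definition pareto_set :: "nat \<Rightarrow> bool list set" where
  "pareto_set n = {replicate i True @ replicate (n - i) False | i. i \<le> n}"

definition pareto_front :: "nat \<Rightarrow> (nat \<times> nat) set" where
  "pareto_front n = fobj ` pareto_set n"

definition hamming_nb :: "bool list \<Rightarrow> bool list \<Rightarrow> bool" where
  "hamming_nb x y \<longleftrightarrow> length x = length y \<and> card {i. i < length x \<and> x ! i \<noteq> y ! i} = 1"

definition good :: "nat \<Rightarrow> bool list set \<Rightarrow> bool list \<Rightarrow> bool" where
  "good n P x \<longleftrightarrow> x \<in> P \<inter> pareto_set n \<and>
     (\<exists>y. hamming_nb x y \<and> y \<in> pareto_set n \<and> fobj y \<notin> fobj ` P)"

definition bad :: "nat \<Rightarrow> bool list set \<Rightarrow> bool list \<Rightarrow> bool" where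
  "bad n P x \<longleftrightarrow> x \<in> P \<inter> pareto_set n \<and> \<not> good n P x"

definition is_population :: "nat \<Rightarrow> bool list set \<Rightarrow> bool" where
  "is_population n P \<longleftrightarrow> finite P \<and> P \<noteq> {} \<and> P \<subseteq> {x. length x = n} \<and>
     (\<forall>x\<in>P. \<forall>y\<in>P. x \<noteq> y \<longrightarrow> \<not> weakly_dom x y)"

definition diversity_favouring ::
  "nat \<Rightarrow> (bool list \<Rightarrow> bool list set \<Rightarrow> real) \<Rightarrow> bool list set \<Rightarrow> bool" where
  "diversity_favouring n score S \<longleftrightarrow>
     (\<forall>P. is_population n P \<longrightarrow>
        (\<forall>x \<in> P \<inter> pareto_set n \<inter> S. \<forall>y \<in> P \<inter> pareto_set n \<inter> S.
           bad n P x \<and> good n P y \<longrightarrow> score x P < score y P))"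

definition inner_strings :: "nat \<Rightarrow> bool list set" where
  "inner_strings n = {x. length x = n} - {replicate n False, replicate n True}"

(* A ranking rk P : P -> {1..|P|} obtained by sorting P by non-increasing score,
   ties broken arbitrarily. *)
definition valid_ranking ::
  "nat \<Rightarrow> (bool list \<Rightarrow> bool list set \<Rightarrow> real) \<Rightarrow> (bool list set \<Rightarrow> bool list \<Rightarrow> nat) \<Rightarrow> bool" where
  "valid_ranking n score rk \<longleftrightarrow>
     (\<forall>P. is_population n P \<longrightarrow>
        bij_betw (rk P) P {1..card P} \<and>
        (\<forall>x\<in>P. \<forall>y\<in>P. score x P > score y P \<longrightarrow> rk P x < rk P y))"

datatype scheme = Exponential | PowerLaw | Harmonic | Tournament

fun rank_weight :: "scheme \<Rightarrow> nat \<Rightarrow> real" where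
  "rank_weight Exponential i = (1/2) ^ i"
| "rank_weight PowerLaw i = 1 / (real i) ^ 2"
| "rank_weight Harmonic i = 1 / real i"
| "rank_weight Tournament i = 0"

definition rank_select :: "scheme \<Rightarrow> bool list set \<Rightarrow> (bool list \<Rightarrow> nat) \<Rightarrow> bool list pmf" where
  "rank_select sch P r = embed_pmf (\<lambda>x. if x \<in> P
       then rank_weight sch (r x) / (\<Sum>j = 1..card P. rank_weight sch j) else 0)"

fun draws :: "'a set \<Rightarrow> nat \<Rightarrow> 'a list pmf" where
  "draws P 0 = return_pmf []"
| "draws P (Suc k) = bind_pmf (pmf_of_set P) (\<lambda>x. map_pmf (\<lambda>xs. x # xs) (draws P k))"

(* tournament of size |P|: the drawn individual with highest score wins,
   i.e. the one of smallest rank (ties in score broken by the ranking) *)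
definition tournament_select :: "bool list set \<Rightarrow> (bool list \<Rightarrow> nat) \<Rightarrow> bool list pmf" where
  "tournament_select P r = map_pmf (arg_min_list r) (draws P (card P))"

definition parent_select :: "scheme \<Rightarrow> bool list set \<Rightarrow> (bool list \<Rightarrow> nat) \<Rightarrow> bool list pmf" where
  "parent_select sch P r =
     (if sch = Tournament then tournament_select P r else rank_select sch P r)"

fun mutate :: "nat \<Rightarrow> bool list \<Rightarrow> bool list pmf" where
  "mutate n [] = return_pmf []"
| "mutate n (b # bs) = bind_pmf (bernoulli_pmf (1 / real n))
      (\<lambda>c. map_pmf (\<lambda>r. (b \<noteq> c) # r) (mutate n bs))"

definition Lval :: "bool list \<Rightarrow> nat" where
  "Lval x = LO x + TZ x"

definition front_of :: "bool list set \<Rightarrow> bool list set" where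
  "front_of P = {x \<in> P. Lval x = Max (Lval ` P)}"

definition update :: "bool list set \<Rightarrow> bool list \<Rightarrow> bool list set" where
  "update P s' = (if \<exists>y\<in>P. dominates y s' then P
                  else insert s' {y \<in> P. \<not> weakly_dom s' y})"

definition gsemo_step ::
  "nat \<Rightarrow> scheme \<Rightarrow> (bool list set \<Rightarrow> bool list \<Rightarrow> nat) \<Rightarrow> bool list set \<Rightarrow> bool list set pmf" where
  "gsemo_step n sch rk P =
     (let P' = front_of P in
      bind_pmf (parent_select sch P' (rk P')) (\<lambda>s. map_pmf (update P) (mutate n s)))"

definition finished :: "nat \<Rightarrow> bool list set \<Rightarrow> bool" where
  "finished n P \<longleftrightarrow> fobj ` P = pareto_front n"

definition init_pop :: "nat \<Rightarrow> bool list set pmf" where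
  "init_pop n = map_pmf (\<lambda>s. {s}) (pmf_of_set {x. length x = n})"

fun state_dist ::
  "nat \<Rightarrow> scheme \<Rightarrow> (bool list set \<Rightarrow> bool list \<Rightarrow> nat) \<Rightarrow> nat \<Rightarrow> bool list set pmf" where
  "state_dist n sch rk 0 = init_pop n"
| "state_dist n sch rk (Suc t) = bind_pmf (state_dist n sch rk t)
      (\<lambda>P. if finished n P then return_pmf P else gsemo_step n sch rk P)"

(* E[T] = sum_{t>=0} Pr[T > t] *)
definition expected_time ::
  "nat \<Rightarrow> scheme \<Rightarrow> (bool list set \<Rightarrow> bool list \<Rightarrow> nat) \<Rightarrow> ennreal" where
  "expected_time n sch rk =
     (\<Sum>t. ennreal (measure_pmf.prob (state_dist n sch rk t) {P. \<not> finished n P}))"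

end

theory Submission
  imports Defs
begin
definition pt :: "nat \<Rightarrow> nat \<Rightarrow> bool list" where
  "pt n i = replicate i True @ replicate (n - i) False"

lemma pareto_set_pt: "pareto_set n = pt n ` {..n}"
  unfolding pareto_set_def pt_def by auto

lemma length_pt[simp]: "length (pt n i) = (if i \<le> n then n else i)"
  unfolding pt_def by auto

lemma nth_pt: "j < n \<Longrightarrow> i \<le> n \<Longrightarrow> pt n i ! j = (j < i)"
  unfolding pt_def by (auto simp: nth_append)

lemma LO_pt[simp]: "i \<le> n \<Longrightarrow> LO (pt n i) = i"
  unfolding pt_def LO_def
  by (cases "n - i") (auto simp: takeWhile_append)

lemma TZ_pt[simp]: "i \<le> n \<Longrightarrow> TZ (pt n i) = n - i"
  unfolding pt_def TZ_def
  by (cases i) (auto simp: takeWhile_append)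

lemma LO_TZ_le: "LO x + TZ x \<le> length x"
proof (induction x)
  case Nil
  then show ?case by (simp add: LO_def TZ_def)
next
  case (Cons a x)
  show ?case
  proof (cases a)
    case True
    have "TZ (a # x) \<le> TZ x"
      unfolding TZ_def using \<open>a\<close>
      by (simp add: takeWhile_append takeWhile_eq_all_conv[THEN iffD2])
    then show ?thesis using Cons True by (simp add: LO_def)
  next
    case False
    have "TZ (a # x) \<le> Suc (length x)"
      unfolding TZ_def by (metis length_Cons length_rev length_takeWhile_le)
    then show ?thesis using False by (simp add: LO_def)
  qed
qed

lemma LO_nth: "j < LO x \<Longrightarrow> x ! j"
  unfolding LO_def by (metis nth_mem set_takeWhileD takeWhile_nth)

lemma LO_nth_not: "LO x < length x \<Longrightarrow> \<not> x ! LO x"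
  unfolding LO_def using nth_length_takeWhile by blast

lemma LO_le: "LO x \<le> length x"
  unfolding LO_def by (rule length_takeWhile_le)

lemma TZ_le: "TZ x \<le> length x"
  unfolding TZ_def by (metis length_rev length_takeWhile_le)

lemma TZ_nth: "j < TZ x \<Longrightarrow> \<not> x ! (length x - Suc j)"
proof -
  assume j: "j < TZ x"
  have jl: "j < length x" using j TZ_le[of x] by simp
  have "\<not> rev x ! j" using j unfolding TZ_def
    by (metis nth_mem set_takeWhileD takeWhile_nth)
  then show ?thesis using jl by (simp add: rev_nth)
qed

lemma TZ_nth_not: "TZ x < length x \<Longrightarrow> x ! (length x - Suc (TZ x))"
proof -
  assume a: "TZ x < length x"
  have "\<not> \<not> rev x ! TZ x" using a unfolding TZ_def
    by (metis length_rev nth_length_takeWhile)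
  then show ?thesis using a by (simp add: rev_nth)
qed

lemma LO_ge: "k \<le> length x \<Longrightarrow> (\<forall>j<k. x ! j) \<Longrightarrow> k \<le> LO x"
proof (induction x arbitrary: k)
  case Nil
  then show ?case by simp
next
  case (Cons a x)
  show ?case
  proof (cases k)
    case 0
    then show ?thesis by simp
  next
    case (Suc k')
    have "a" using Cons.prems Suc by force
    have "k' \<le> LO x" using Cons.IH[of k'] Cons.prems Suc by force
    then show ?thesis using \<open>a\<close> Suc by (simp add: LO_def)
  qed
qed

lemma pareto_char:
  assumes "length x = n" "n \<le> LO x + TZ x"
  shows "x = pt n (LO x)"
proof (rule nth_equalityI)
  have a: "LO x \<le> n" using LO_le assms by metis
  show "length x = length (pt n (LO x))" using assms a by simp
  fix j assume "j < length x"
  then have j: "j < n" using assms by simp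
  show "x ! j = pt n (LO x) ! j"
  proof (cases "j < LO x")
    case True
    then show ?thesis using LO_nth nth_pt[OF j a] by simp
  next
    case False
    then have "n - Suc j < TZ x" using assms(2) j by linarith
    then have "\<not> x ! (n - Suc (n - Suc j))" using TZ_nth[of "n - Suc j" x] assms(1) by simp
    moreover have "n - Suc (n - Suc j) = j" using j by simp
    ultimately show ?thesis using False nth_pt[OF j a] by simp
  qed
qed

lemma pt_in_pareto: "i \<le> n \<Longrightarrow> pt n i \<in> pareto_set n"
  by (simp add: pareto_set_pt)

lemma pareto_LO_TZ: "x \<in> pareto_set n \<Longrightarrow> LO x + TZ x = n \<and> length x = n"
  by (auto simp: pareto_set_pt)

lemma pareto_iff: "length x = n \<Longrightarrow> x \<in> pareto_set n \<longleftrightarrow> n \<le> LO x + TZ x"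
proof
  assume "length x = n" "x \<in> pareto_set n"
  then show "n \<le> LO x + TZ x" using pareto_LO_TZ[of x n] by simp
next
  assume a: "length x = n" "n \<le> LO x + TZ x"
  then have "x = pt n (LO x)" by (rule pareto_char)
  moreover have "LO x \<le> n" using LO_le[of x] a by simp
  ultimately show "x \<in> pareto_set n" using pt_in_pareto by metis
qed

lemma weakly_dom_pareto:
  assumes "length s = n" "y \<in> pareto_set n" "weakly_dom s y"
  shows "s = y"
proof -
  obtain i where i: "i \<le> n" "y = pt n i" using assms(2) by (auto simp: pareto_set_pt)
  have "LO s \<ge> i" "TZ s \<ge> n - i" using assms(3) i by (auto simp: weakly_dom_def)
  moreover have "LO s + TZ s \<le> n" using LO_TZ_le[of s] assms(1) by simp
  ultimately have "LO s = i" "n \<le> LO s + TZ s" using i by linarith+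
  then show ?thesis using pareto_char[OF assms(1)] i by simp
qed

lemma fobj_inj_pareto: "x \<in> pareto_set n \<Longrightarrow> y \<in> pareto_set n \<Longrightarrow> fobj x = fobj y \<Longrightarrow> x = y"
  by (auto simp: pareto_set_pt fobj_def)

fun hdist :: "bool list \<Rightarrow> bool list \<Rightarrow> nat" where
  "hdist (a # x) (b # y) = (if a = b then 0 else 1) + hdist x y"
| "hdist _ _ = 0"

lemma hdist_same[simp]: "hdist x x = 0"
  by (induction x) auto

lemma hdist_update: "k < length x \<Longrightarrow> hdist x (x[k := v]) = (if x ! k = v then 0 else 1)"
proof (induction x arbitrary: k)
  case Nil
  then show ?case by simp
next
  case (Cons a x)
  then show ?case by (cases k) auto
qed

lemma hdist_card: "length x = length y \<Longrightarrow> card {i. i < length x \<and> x ! i \<noteq> y ! i} = hdist x y"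
proof (induction x y rule: hdist.induct)
  case (1 a x b y)
  have eq: "{i. i < length (a # x) \<and> (a # x) ! i \<noteq> (b # y) ! i} =
     (if a = b then {} else {0}) \<union> Suc ` {i. i < length x \<and> x ! i \<noteq> y ! i}"
    apply (rule set_eqI)
    subgoal for i by (cases i) (auto simp: image_iff)
    done
  have "card ((if a = b then {} else {0}) \<union> Suc ` {i. i < length x \<and> x ! i \<noteq> y ! i})
      = (if a = b then 0 else 1) + card (Suc ` {i. i < length x \<and> x ! i \<noteq> y ! i})"
    by (auto simp: card_insert_if)
  also have "card (Suc ` {i. i < length x \<and> x ! i \<noteq> y ! i}) = card {i. i < length x \<and> x ! i \<noteq> y ! i}"
    by (simp add: card_image)
  finally show ?case using 1 eq by simp
qed auto

lemma hamming_hdist: "hamming_nb x y \<Longrightarrow> hdist x y = 1 \<and> length y = length x"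
  unfolding hamming_nb_def using hdist_card by metis

lemma hamming_pt: "i < n \<Longrightarrow> hamming_nb (pt n i) (pt n (Suc i)) \<and> hamming_nb (pt n (Suc i)) (pt n i)"
proof -
  assume i: "i < n"
  have "{j. j < length (pt n i) \<and> pt n i ! j \<noteq> pt n (Suc i) ! j} = {i}"
    using i by (auto simp: nth_pt)
  moreover have "{j. j < length (pt n (Suc i)) \<and> pt n (Suc i) ! j \<noteq> pt n i ! j} = {i}"
    using i by (auto simp: nth_pt)
  ultimately show ?thesis using i unfolding hamming_nb_def by simp
qed

lemma improve_nonpareto:
  assumes "length x = n" "x \<notin> pareto_set n"
  shows "hdist x (x[LO x := True]) = 1 \<and> LO (x[LO x := True]) > LO x
         \<and> TZ (x[LO x := True]) = TZ x \<and> length (x[LO x := True]) = n"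
proof -
  let ?a = "LO x" and ?b = "TZ x"
  have lt: "?a + ?b < n" using pareto_iff[OF assms(1)] assms(2) by simp
  have an: "\<not> x ! ?a" using LO_nth_not[of x] lt assms(1) by simp
  have bn: "x ! (n - Suc ?b)" using TZ_nth_not[of x] lt assms(1) by simp
  have "?a \<noteq> n - Suc ?b" using an bn by metis
  then have ab: "?a < n - Suc ?b" using lt by linarith
  let ?y = "x[?a := True]"
  have h: "hdist x ?y = 1" using hdist_update[of ?a x True] an lt assms(1) by simp
  have "Suc ?a \<le> LO ?y"
    by (rule LO_ge) (use lt assms(1) LO_nth in \<open>auto simp: nth_list_update less_Suc_eq\<close>)
  moreover have "TZ ?y = TZ x"
  proof -
    have r: "rev ?y = (rev x)[n - ?a - 1 := True]" using rev_update[of ?a x True] lt assms(1) by simp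
    have "length (takeWhile Not (rev x)) < n - ?a - 1" using ab unfolding TZ_def by simp
    moreover have "\<And>k (xs::bool list) v. length (takeWhile Not xs) < k \<Longrightarrow> takeWhile Not (xs[k := v]) = takeWhile Not xs"
    proof -
      fix k and xs :: "bool list" and v
      show "length (takeWhile Not xs) < k \<Longrightarrow> takeWhile Not (xs[k := v]) = takeWhile Not xs"
      proof (induction xs arbitrary: k)
        case Nil
        then show ?case by simp
      next
        case (Cons c xs)
        then show ?case by (cases k) (auto split: if_splits)
      qed
    qed
    ultimately show ?thesis unfolding TZ_def using r by simp
  qed
  ultimately show ?thesis using h assms(1) by simp
qed

definition Phi :: "nat \<Rightarrow> bool list set \<Rightarrow> nat" where
  "Phi n P = Max (Lval ` P) + card (P \<inter> pareto_set n)"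

lemma finite_pareto: "finite (pareto_set n)"
  by (simp add: pareto_set_pt)

lemma card_pareto: "card (pareto_set n) \<le> Suc n"
  unfolding pareto_set_pt by (metis card_atMost card_image_le finite_atMost)

lemma Lval_le: "length x = n \<Longrightarrow> Lval x \<le> n"
  unfolding Lval_def using LO_TZ_le[of x] by simp

lemma Lval_pareto: "x \<in> pareto_set n \<Longrightarrow> Lval x = n"
  unfolding Lval_def using pareto_LO_TZ by blast

lemma pareto_Lval: "length x = n \<Longrightarrow> n \<le> Lval x \<Longrightarrow> x \<in> pareto_set n"
  unfolding Lval_def using pareto_iff by blast

lemma pop_lengths: "is_population n P \<Longrightarrow> x \<in> P \<Longrightarrow> length x = n"
  unfolding is_population_def by blast

lemma pop_finite: "is_population n P \<Longrightarrow> finite P"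
  unfolding is_population_def by blast

lemma pop_ne: "is_population n P \<Longrightarrow> P \<noteq> {}"
  unfolding is_population_def by blast

lemma pop_nwd: "is_population n P \<Longrightarrow> x \<in> P \<Longrightarrow> y \<in> P \<Longrightarrow> weakly_dom x y \<Longrightarrow> x = y"
  unfolding is_population_def by blast

lemma MaxL_le: "is_population n P \<Longrightarrow> Max (Lval ` P) \<le> n"
  using pop_finite pop_ne pop_lengths Lval_le by (simp add: Max_le_iff) blast

lemma Phi_le: "is_population n P \<Longrightarrow> Phi n P \<le> 2 * n + 1"
proof -
  assume p: "is_population n P"
  have "card (P \<inter> pareto_set n) \<le> card (pareto_set n)"
    by (simp add: card_mono finite_pareto)
  then show ?thesis using MaxL_le[OF p] card_pareto[of n] unfolding Phi_def by linarith
qed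

lemma update_pop:
  assumes p: "is_population n P" and s: "length s = n"
  shows "is_population n (update P s)"
proof (cases "\<exists>y\<in>P. dominates y s")
  case True
  then show ?thesis using p by (simp add: update_def)
next
  case False
  let ?Q = "insert s {y \<in> P. \<not> weakly_dom s y}"
  have "update P s = ?Q" using False by (simp add: update_def)
  moreover have "is_population n ?Q"
    unfolding is_population_def
  proof (intro conjI ballI impI)
    show "finite ?Q" using pop_finite[OF p] by simp
    show "?Q \<noteq> {}" by simp
    show "?Q \<subseteq> {x. length x = n}" using pop_lengths[OF p] s by auto
    fix x y assume x: "x \<in> ?Q" and y: "y \<in> ?Q" and xy: "x \<noteq> y"
    show "\<not> weakly_dom x y"
    proof
      assume w: "weakly_dom x y"
      consider "x = s" "y \<in> P" "\<not> weakly_dom s y" | "y = s" "x \<in> P" | "x \<in> P" "y \<in> P"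
        using x y xy by auto
      then show False
      proof cases
        case 1 then show ?thesis using w by simp
      next
        case 2
        then have "\<not> dominates x s" using False by blast
        then have "weakly_dom s x" using w 2 unfolding dominates_def weakly_dom_def by auto
        then show ?thesis using x 2 xy by auto
      next
        case 3 then show ?thesis using pop_nwd[OF p] w xy by blast
      qed
    qed
  qed
  ultimately show ?thesis by simp
qed

lemma update_pareto_mono:
  assumes p: "is_population n P" and s: "length s = n"
  shows "P \<inter> pareto_set n \<subseteq> update P s \<inter> pareto_set n"
proof
  fix y assume y: "y \<in> P \<inter> pareto_set n"
  show "y \<in> update P s \<inter> pareto_set n"
  proof (cases "\<exists>y\<in>P. dominates y s")
    case True
    then show ?thesis using y by (simp add: update_def)
  next
    case False
    then show ?thesis using y weakly_dom_pareto[OF s, of y] by (auto simp: update_def)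
  qed
qed

lemma update_L_mono:
  assumes "y \<in> P"
  shows "\<exists>z\<in>update P s. Lval y \<le> Lval z"
proof (cases "\<exists>y\<in>P. dominates y s")
  case True
  then show ?thesis using assms by (auto simp: update_def)
next
  case False
  then show ?thesis using assms by (auto simp: update_def weakly_dom_def Lval_def)
qed

lemma update_MaxL_mono:
  assumes p: "is_population n P" and s: "length s = n"
  shows "Max (Lval ` P) \<le> Max (Lval ` update P s)"
proof -
  have p2: "is_population n (update P s)" by (rule update_pop[OF p s])
  obtain y where y: "y \<in> P" "Lval y = Max (Lval ` P)"
    using pop_finite[OF p] pop_ne[OF p] by (metis (mono_tags, lifting) Max_in finite_imageI image_iff image_is_empty)
  obtain z where z: "z \<in> update P s" "Lval y \<le> Lval z" using update_L_mono[OF y(1)] by blast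
  have "Lval z \<le> Max (Lval ` update P s)" using z pop_finite[OF p2] by simp
  then show ?thesis using y z by simp
qed

lemma Phi_mono:
  assumes p: "is_population n P" and s: "length s = n"
  shows "Phi n P \<le> Phi n (update P s)"
proof -
  have p2: "is_population n (update P s)" by (rule update_pop[OF p s])
  have "card (P \<inter> pareto_set n) \<le> card (update P s \<inter> pareto_set n)"
    using update_pareto_mono[OF p s] pop_finite[OF p2] by (simp add: card_mono)
  then show ?thesis using update_MaxL_mono[OF p s] unfolding Phi_def by linarith
qed

lemma improve1:
  assumes p: "is_population n P" and s: "length s = n" and L: "Max (Lval ` P) < Lval s"
  shows "Phi n P < Phi n (update P s)"
proof -
  have p2: "is_population n (update P s)" by (rule update_pop[OF p s])
  have nd: "\<not> (\<exists>y\<in>P. dominates y s)"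
  proof
    assume "\<exists>y\<in>P. dominates y s"
    then obtain y where y: "y \<in> P" "dominates y s" by blast
    then have "Lval s \<le> Lval y" by (auto simp: dominates_def weakly_dom_def Lval_def)
    moreover have "Lval y \<le> Max (Lval ` P)" using y pop_finite[OF p] by simp
    ultimately show False using L by simp
  qed
  then have "s \<in> update P s" by (simp add: update_def)
  then have "Lval s \<le> Max (Lval ` update P s)" using pop_finite[OF p2] by simp
  moreover have "card (P \<inter> pareto_set n) \<le> card (update P s \<inter> pareto_set n)"
    using update_pareto_mono[OF p s] pop_finite[OF p2] by (simp add: card_mono)
  ultimately show ?thesis using L unfolding Phi_def by linarith
qed

lemma improve2:
  assumes p: "is_population n P" and z: "z \<in> pareto_set n" "z \<notin> P"
  shows "Phi n P < Phi n (update P z)"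
proof -
  have zl: "length z = n" using z pareto_LO_TZ by blast
  have p2: "is_population n (update P z)" by (rule update_pop[OF p zl])
  have nd: "\<not> (\<exists>y\<in>P. dominates y z)"
  proof
    assume "\<exists>y\<in>P. dominates y z"
    then obtain y where y: "y \<in> P" "dominates y z" by blast
    then have "Lval z < Lval y" by (auto simp: dominates_def weakly_dom_def Lval_def)
    moreover have "Lval y \<le> n" using Lval_le[OF pop_lengths[OF p y(1)]] .
    ultimately show False using Lval_pareto[OF z(1)] by simp
  qed
  then have "z \<in> update P z" by (simp add: update_def)
  then have "P \<inter> pareto_set n \<subset> update P z \<inter> pareto_set n"
    using update_pareto_mono[OF p zl] z by blast
  then have "card (P \<inter> pareto_set n) < card (update P z \<inter> pareto_set n)"
    using pop_finite[OF p2] by (simp add: psubset_card_mono)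
  then show ?thesis using update_MaxL_mono[OF p zl] unfolding Phi_def by linarith
qed

lemma not_finished_missing:
  assumes p: "is_population n P" and nf: "\<not> finished n P"
  shows "\<exists>i\<le>n. pt n i \<notin> P"
proof (rule ccontr)
  assume "\<not> (\<exists>i\<le>n. pt n i \<notin> P)"
  then have all: "\<And>i. i \<le> n \<Longrightarrow> pt n i \<in> P" by blast
  have sub: "pareto_set n \<subseteq> P" using all by (auto simp: pareto_set_pt)
  have "P \<subseteq> pareto_set n"
  proof
    fix x assume x: "x \<in> P"
    have xl: "length x = n" using pop_lengths[OF p x] .
    have a: "LO x \<le> n" using LO_le[of x] xl by simp
    have "weakly_dom (pt n (LO x)) x"
      using a LO_TZ_le[of x] xl by (simp add: weakly_dom_def)
    then have "pt n (LO x) = x" using pop_nwd[OF p all[OF a] x] by blast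
    then show "x \<in> pareto_set n" using pt_in_pareto[OF a] by simp
  qed
  then have "P = pareto_set n" using sub by blast
  then show False using nf by (simp add: finished_def pareto_front_def)
qed

lemma front_pop:
  assumes p: "is_population n P"
  shows "is_population n (front_of P)"
proof -
  have "Max (Lval ` P) \<in> Lval ` P" using pop_finite[OF p] pop_ne[OF p] by simp
  then have "front_of P \<noteq> {}" unfolding front_of_def by auto
  then show ?thesis using p unfolding is_population_def front_of_def by auto
qed

lemma front_sub: "front_of P \<subseteq> P"
  unfolding front_of_def by auto

lemma front_phase2:
  assumes p: "is_population n P" and ne: "P \<inter> pareto_set n \<noteq> {}"
  shows "front_of P = P \<inter> pareto_set n"
proof -
  obtain y where y: "y \<in> P" "y \<in> pareto_set n" using ne by blast
  have "Max (Lval ` P) = n"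
  proof (rule antisym)
    show "Max (Lval ` P) \<le> n" by (rule MaxL_le[OF p])
    show "n \<le> Max (Lval ` P)" using y Lval_pareto[OF y(2)] pop_finite[OF p]
      by (metis Max_ge finite_imageI imageI)
  qed
  show ?thesis
  proof (rule set_eqI)
    fix x
    show "x \<in> front_of P \<longleftrightarrow> x \<in> P \<inter> pareto_set n"
    proof
      assume "x \<in> front_of P"
      then have "x \<in> P" "Lval x = n" using \<open>Max (Lval ` P) = n\<close> unfolding front_of_def by auto
      then show "x \<in> P \<inter> pareto_set n" using pareto_Lval[OF pop_lengths[OF p]] by auto
    next
      assume "x \<in> P \<inter> pareto_set n"
      then show "x \<in> front_of P" using \<open>Max (Lval ` P) = n\<close> Lval_pareto unfolding front_of_def by auto
    qed
  qed
qed

lemma front_phase1: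
  assumes p: "is_population n P" and e: "P \<inter> pareto_set n = {}" and x: "x \<in> front_of P"
  shows "x \<notin> pareto_set n \<and> Lval x = Max (Lval ` P) \<and> length x = n"
  using assms pop_lengths[OF p] unfolding front_of_def by auto

lemma card_front:
  assumes p: "is_population n P"
  shows "card (front_of P) \<le> Suc n"
proof -
  have inj: "inj_on LO (front_of P)"
  proof
    fix x y assume x: "x \<in> front_of P" and y: "y \<in> front_of P" and e: "LO x = LO y"
    have "Lval x = Lval y" using x y unfolding front_of_def by auto
    then have "TZ x = TZ y" using e unfolding Lval_def by simp
    then have "weakly_dom x y" using e by (simp add: weakly_dom_def)
    then show "x = y" using pop_nwd[OF p] x y front_sub by blast
  qed
  have "LO ` front_of P \<subseteq> {..n}"
    using pop_lengths[OF p] front_sub LO_le by (fastforce)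
  then have "card (LO ` front_of P) \<le> Suc n" by (metis card_atMost card_mono finite_atMost)
  then show ?thesis using card_image[OF inj] by simp
qed

lemma card_pre_bij:
  assumes "bij_betw f A B" "C \<subseteq> B"
  shows "card {x\<in>A. f x \<in> C} = card C"
proof -
  have inj: "inj_on f {x\<in>A. f x \<in> C}" using assms(1) unfolding bij_betw_def by (auto intro: inj_on_subset)
  have "f ` {x\<in>A. f x \<in> C} = C" using assms unfolding bij_betw_def by auto
  then show ?thesis using card_image[OF inj] by simp
qed

lemma pt_inner: "0 < i \<Longrightarrow> i < n \<Longrightarrow> pt n i \<in> inner_strings n"
proof -
  assume i: "0 < i" "i < n"
  have "pt n i ! 0" using i nth_pt[of 0 n i] by simp
  moreover have "\<not> replicate n False ! 0" using i by simp
  ultimately have a: "pt n i \<noteq> replicate n False" by metis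
  have "\<not> pt n i ! (n - 1)" using i nth_pt[of "n - 1" n i] by simp
  moreover have "replicate n True ! (n - 1)" using i by simp
  ultimately have "pt n i \<noteq> replicate n True" by metis
  with a show ?thesis using i by (simp add: inner_strings_def)
qed

lemma all_from_interior:
  fixes F :: "nat set"
  assumes nb: "\<And>i. 0 < i \<Longrightarrow> i < n \<Longrightarrow> i \<in> F \<Longrightarrow> Suc i \<in> F \<and> i - 1 \<in> F"
    and j: "0 < j" "j < n" "j \<in> F" and k: "k \<le> n"
  shows "k \<in> F"
proof -
  have up: "j + m \<le> n \<Longrightarrow> j + m \<in> F" for m
  proof (induction m)
    case 0 then show ?case using j by simp
  next
    case (Suc m)
    then have "j + m \<in> F" by simp
    moreover have "0 < j + m" "j + m < n" using Suc.prems j by auto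
    ultimately show ?case using nb[of "j + m"] by simp
  qed
  have down: "m \<le> j \<Longrightarrow> j - m \<in> F" for m
  proof (induction m)
    case 0 then show ?case using j by simp
  next
    case (Suc m)
    then have jm: "j - m \<in> F" by simp
    have a: "0 < j - m" using Suc.prems by simp
    have b: "j - m < n" using j by simp
    have "j - m - 1 \<in> F" using nb[OF a b jm] by blast
    then show ?case by (metis diff_Suc_eq_diff_pred diff_commute)
  qed
  show ?thesis
  proof (cases "j \<le> k")
    case True then show ?thesis using up[of "k - j"] k by simp
  next
    case False then show ?thesis using down[of "j - k"] by simp
  qed
qed
lemma phase2_target:
  assumes p: "is_population n P" and ne: "P \<inter> pareto_set n \<noteq> {}" and nf: "\<not> finished n P"
    and n2: "2 \<le> n"
    and df: "diversity_favouring n score (inner_strings n)" and vr: "valid_ranking n score rk"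
  shows "\<exists>y\<in>front_of P. \<exists>z. z \<in> pareto_set n \<and> z \<notin> P \<and> hdist y z = 1 \<and> rk (front_of P) y \<le> 3"
proof -
  let ?P' = "front_of P"
  let ?r = "rk ?P'"
  have fr: "?P' = P \<inter> pareto_set n" by (rule front_phase2[OF p ne])
  have p': "is_population n ?P'" by (rule front_pop[OF p])
  have bij: "bij_betw ?r ?P' {1..card ?P'}" and sc: "\<And>x y. x \<in> ?P' \<Longrightarrow> y \<in> ?P' \<Longrightarrow> score x ?P' > score y ?P' \<Longrightarrow> ?r x < ?r y"
    using vr p' unfolding valid_ranking_def by blast+
  have fin': "finite ?P'" using pop_finite[OF p'] .
  define F where "F = {i. i \<le> n \<and> pt n i \<in> P}"
  have ptF: "\<And>i. i \<le> n \<Longrightarrow> pt n i \<in> P \<longleftrightarrow> i \<in> F" unfolding F_def by simp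
  have rk_le: "\<And>y. y \<in> ?P' \<Longrightarrow> ?r y \<le> card ?P'" using bij unfolding bij_betw_def by auto
  show ?thesis
  proof (cases "\<exists>i. 0 < i \<and> i < n \<and> i \<in> F \<and> (Suc i \<notin> F \<or> i - 1 \<notin> F)")
    case True
    define G where "G = {y \<in> ?P'. good n ?P' y \<and> y \<in> inner_strings n}"
    have goodI: "good n ?P' (pt n i)" if "i \<le> n" "j \<le> n" "i \<in> F" "j \<notin> F" "hamming_nb (pt n i) (pt n j)" for i j
    proof -
      have "pt n i \<in> ?P' \<inter> pareto_set n" using that fr ptF pt_in_pareto by auto
      moreover have "fobj (pt n j) \<notin> fobj ` ?P'"
      proof
        assume "fobj (pt n j) \<in> fobj ` ?P'"
        then obtain x where x: "x \<in> ?P'" "fobj (pt n j) = fobj x" by auto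
        then have "x = pt n j" using fobj_inj_pareto[of x n "pt n j"] fr pt_in_pareto[OF that(2)] by auto
        then show False using x fr ptF[OF that(2)] that(4) by auto
      qed
      moreover have "pt n j \<in> pareto_set n" using pt_in_pareto that by simp
      ultimately show ?thesis unfolding good_def using that(5) by blast
    qed
    obtain i where i: "0 < i" "i < n" "i \<in> F" "Suc i \<notin> F \<or> i - 1 \<notin> F" using True by blast
    have "pt n i \<in> G"
    proof -
      have "good n ?P' (pt n i)"
      proof (cases "Suc i \<notin> F")
        case True
        then show ?thesis using goodI[of i "Suc i"] i hamming_pt[of i n] by simp
      next
        case False
        then have "i - 1 \<notin> F" using i by blast
        moreover have "hamming_nb (pt n i) (pt n (i - 1))" using hamming_pt[of "i - 1" n] i by simp
        ultimately show ?thesis using goodI[of i "i - 1"] i by simp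
      qed
      moreover have "pt n i \<in> ?P'" using \<open>good n ?P' (pt n i)\<close> unfolding good_def by blast
      ultimately show ?thesis unfolding G_def using pt_inner[OF i(1,2)] by blast
    qed
    then have Gne: "G \<noteq> {}" by blast
    have finG: "finite G" unfolding G_def using fin' by simp
    have "Min (?r ` G) \<in> ?r ` G" using finG Gne by simp
    then obtain y0 where y00: "y0 \<in> G" "?r y0 = Min (?r ` G)" by auto
    have y0: "y0 \<in> G" "\<And>y. y \<in> G \<Longrightarrow> ?r y0 \<le> ?r y"
      using y00 finG by auto
    have y0P: "y0 \<in> ?P'" and y0g: "good n ?P' y0" and y0i: "y0 \<in> inner_strings n"
      using y0(1) unfolding G_def by auto
    have sub: "{x\<in>?P'. ?r x \<in> {1..<?r y0}} \<subseteq> {replicate n False, replicate n True}"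
    proof
      fix x assume x: "x \<in> {x\<in>?P'. ?r x \<in> {1..<?r y0}}"
      then have xP: "x \<in> ?P'" and xr: "?r x < ?r y0" by auto
      show "x \<in> {replicate n False, replicate n True}"
      proof (rule ccontr)
        assume ni: "x \<notin> {replicate n False, replicate n True}"
        have xl: "length x = n" using pop_lengths[OF p' xP] .
        then have xi: "x \<in> inner_strings n" using ni by (simp add: inner_strings_def)
        have xpar: "x \<in> pareto_set n" using xP fr by auto
        show False
        proof (cases "good n ?P' x")
          case True
          then have "x \<in> G" unfolding G_def using xP xi by simp
          then show False using y0(2)[of x] xr by simp
        next
          case False
          then have "bad n ?P' x" unfolding bad_def using xP xpar by simp
          have dfP: "\<forall>x \<in> ?P' \<inter> pareto_set n \<inter> inner_strings n. \<forall>y \<in> ?P' \<inter> pareto_set n \<inter> inner_strings n.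
             bad n ?P' x \<and> good n ?P' y \<longrightarrow> score x ?P' < score y ?P'"
            using df p' unfolding diversity_favouring_def by blast
          have y0par: "y0 \<in> pareto_set n" using y0P fr by auto
          have "score x ?P' < score y0 ?P'"
            using dfP[rule_format, of x y0] xP xi xpar y0P y0i y0g y0par \<open>bad n ?P' x\<close> by blast
          then show False using sc[OF y0P xP] xr by simp
        qed
      qed
    qed
    have "card {x\<in>?P'. ?r x \<in> {1..<?r y0}} = card {1..<?r y0}"
      by (rule card_pre_bij[OF bij]) (use rk_le[OF y0P] in auto)
    moreover have "card {x\<in>?P'. ?r x \<in> {1..<?r y0}} \<le> 2"
    proof -
      have "card {x\<in>?P'. ?r x \<in> {1..<?r y0}} \<le> card {replicate n False, replicate n True}"
        using card_mono[OF _ sub] by simp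
      also have "\<dots> \<le> 2" by (simp add: card_insert_if)
      finally show ?thesis .
    qed
    ultimately have r3: "?r y0 \<le> 3" by simp
    obtain z where z: "hamming_nb y0 z" "z \<in> pareto_set n" "fobj z \<notin> fobj ` ?P'"
      using y0g unfolding good_def by blast
    have "z \<notin> P" using z fr by auto
    then show ?thesis using y0P z hamming_hdist r3 by blast
  next
    case False
    have nb: "\<And>i. 0 < i \<Longrightarrow> i < n \<Longrightarrow> i \<in> F \<Longrightarrow> Suc i \<in> F \<and> i - 1 \<in> F"
      using False by blast
    have noint: "\<And>j. 0 < j \<Longrightarrow> j < n \<Longrightarrow> j \<notin> F"
    proof
      fix j assume j: "0 < j" "j < n" "j \<in> F"
      obtain k where k: "k \<le> n" "pt n k \<notin> P" using not_finished_missing[OF p nf] by blast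
      then show False using all_from_interior[OF nb j k(1)] ptF[OF k(1)] by blast
    qed
    have cardle: "card ?P' \<le> 2"
    proof -
      have "?P' \<subseteq> {pt n 0, pt n n}"
      proof
        fix x assume "x \<in> ?P'"
        then have "x \<in> P" "x \<in> pareto_set n" using fr by auto
        then obtain i where "i \<le> n" "x = pt n i" "i \<in> F" using ptF by (auto simp: pareto_set_pt)
        moreover have "i = 0 \<or> i = n" using noint[of i] \<open>i \<le> n\<close> \<open>i \<in> F\<close> by linarith
        ultimately show "x \<in> {pt n 0, pt n n}" by blast
      qed
      then have "card ?P' \<le> card {pt n 0, pt n n}" using card_mono by (metis finite.emptyI finite.insertI)
      also have "\<dots> \<le> 2" by (simp add: card_insert_if)
      finally show ?thesis .
    qed
    obtain x where x: "x \<in> ?P'" using pop_ne[OF p'] by blast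
    then have "x \<in> P" "x \<in> pareto_set n" using fr by auto
    then obtain i where i: "i \<le> n" "x = pt n i" "i \<in> F" using ptF by (auto simp: pareto_set_pt)
    have i0n: "i = 0 \<or> i = n" using noint[of i] i by linarith
    show ?thesis
    proof (cases "i = 0")
      case True
      have "1 \<notin> F" using noint[of 1] n2 by simp
      then have "pt n 1 \<notin> P" using ptF[of 1] n2 by simp
      moreover have "hdist x (pt n 1) = 1" using hamming_pt[of 0 n] n2 True i hamming_hdist by simp
      moreover have "rk (front_of P) x \<le> 3" using rk_le[OF x] cardle by simp
      moreover have "pt n 1 \<in> pareto_set n" using pt_in_pareto[of 1 n] n2 by simp
      ultimately show ?thesis using x by blast
    next
      case False
      then have "i = n" using i0n by simp
      have "n - 1 \<notin> F" using noint[of "n - 1"] n2 by simp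
      then have "pt n (n - 1) \<notin> P" using ptF[of "n - 1"] by simp
      moreover have "hdist x (pt n (n - 1)) = 1" using hamming_pt[of "n - 1" n] n2 \<open>i = n\<close> i hamming_hdist by simp
      moreover have "rk (front_of P) x \<le> 3" using rk_le[OF x] cardle by simp
      moreover have "pt n (n - 1) \<in> pareto_set n" using pt_in_pareto[of "n - 1" n] n2 by simp
      ultimately show ?thesis using x by blast
    qed
  qed
qed

lemma hdist_le: "hdist x y \<le> length x"
  by (induction x y rule: hdist.induct) auto

lemma pmf_map_Cons: "pmf (map_pmf (\<lambda>r. h # r) M) (t0 # ts) = (if h = t0 then pmf M ts else 0)"
proof -
  have "(\<lambda>r. h # r) -` {t0 # ts} = (if h = t0 then {ts} else {})" by auto
  then show ?thesis by (simp add: pmf_map measure_pmf_single)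
qed

lemma set_mutate: "t \<in> set_pmf (mutate n s) \<Longrightarrow> length t = length s"
  by (induction n s arbitrary: t rule: mutate.induct) auto

lemma pmf_mutate:
  assumes n: "1 \<le> n"
  shows "length t = length s \<Longrightarrow>
    pmf (mutate n s) t = (1 / real n) ^ hdist s t * (1 - 1 / real n) ^ (length s - hdist s t)"
proof (induction s arbitrary: t)
  case Nil
  then show ?case by simp
next
  case (Cons b bs)
  obtain t0 ts where t: "t = t0 # ts" using Cons.prems by (cases t) auto
  have len: "length ts = length bs" using Cons.prems t by simp
  have q0: "0 \<le> 1 / real n" and q1: "1 / real n \<le> 1" using n by auto
  let ?q = "1 / real n"
  let ?X = "pmf (mutate n bs) ts"
  have "pmf (mutate n (b # bs)) t =
      (\<integral>c. pmf (map_pmf (\<lambda>r. (b \<noteq> c) # r) (mutate n bs)) t \<partial>measure_pmf (bernoulli_pmf ?q))"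
    by (simp add: pmf_bind)
  also have "\<dots> = (if \<not> b = t0 then ?X else 0) * ?q + (if b = t0 then ?X else 0) * (1 - ?q)"
    using q0 q1 t by (simp add: pmf_map_Cons)
  finally have e: "pmf (mutate n (b # bs)) t = (if \<not> b = t0 then ?X else 0) * ?q + (if b = t0 then ?X else 0) * (1 - ?q)" .
  have hl: "hdist bs ts \<le> length bs" by (rule hdist_le)
  show ?case
  proof (cases "b = t0")
    case True
    have "Suc (length bs) - hdist bs ts = Suc (length bs - hdist bs ts)" using hl by simp
    then show ?thesis using e True t Cons.IH[OF len] by simp
  next
    case False
    then show ?thesis using e t Cons.IH[OF len] by simp
  qed
qed

lemma exp_bound: "1 \<le> m \<Longrightarrow> exp (-1) \<le> (1 - 1 / (real m + 1)) ^ m"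
proof -
  assume m: "1 \<le> m"
  have "1 + 1 / real m \<le> exp (1 / real m)" by (rule exp_ge_add_one_self)
  then have "inverse (exp (1 / real m)) \<le> inverse (1 + 1 / real m)"
    using m by (intro le_imp_inverse_le) (auto simp: add_pos_pos)
  also have "inverse (1 + 1 / real m) = 1 - 1 / (real m + 1)"
    using m by (simp add: field_simps)
  finally have a: "exp (- (1 / real m)) \<le> 1 - 1 / (real m + 1)" by (simp add: exp_minus)
  have "exp (-1) = exp (- (1 / real m)) ^ m"
    using m by (simp add: exp_of_nat_mult[symmetric])
  also have "\<dots> \<le> (1 - 1 / (real m + 1)) ^ m"
    by (rule power_mono[OF a]) simp
  finally show ?thesis .
qed

lemma mutate_one:
  assumes n: "2 \<le> n" and l: "length s = n" "length t = n" and h: "hdist s t = 1"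
  shows "pmf (mutate n s) t \<ge> exp (-1) / real n"
proof -
  have "pmf (mutate n s) t = (1 / real n) * (1 - 1 / real n) ^ (n - 1)"
    using pmf_mutate[of n t s] n l h by simp
  moreover have "exp (-1) \<le> (1 - 1 / real n) ^ (n - 1)"
    using exp_bound[of "n - 1"] n by (simp add: of_nat_diff)
  ultimately show ?thesis using n by (simp add: divide_right_mono mult_left_mono divide_inverse mult.commute)
qed

lemma weight_nonneg: "0 \<le> rank_weight sch i"
  by (cases sch) auto

lemma weight_pos1: "sch \<noteq> Tournament \<Longrightarrow> 0 < rank_weight sch 1"
  by (cases sch) auto

lemma rank_select_pmf:
  assumes sch: "sch \<noteq> Tournament" and fin: "finite A" and ne: "A \<noteq> {}"
    and bij: "bij_betw r A {1..card A}"
  shows "pmf (rank_select sch A r) x =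
     (if x \<in> A then rank_weight sch (r x) / (\<Sum>j = 1..card A. rank_weight sch j) else 0)"
proof -
  let ?S = "\<Sum>j = 1..card A. rank_weight sch j"
  let ?f = "\<lambda>x. if x \<in> A then rank_weight sch (r x) / ?S else 0"
  have c1: "1 \<le> card A" using fin ne by (simp add: Suc_le_eq card_gt_0_iff)
  have "rank_weight sch 1 \<le> ?S"
    by (rule member_le_sum) (use c1 weight_nonneg in auto)
  then have Spos: "0 < ?S" using weight_pos1[OF sch] by linarith
  have nonneg: "\<And>x. 0 \<le> ?f x" using Spos weight_nonneg by simp
  have "(\<integral>\<^sup>+x. ennreal (?f x) \<partial>count_space UNIV) = (\<Sum>x\<in>A. ennreal (?f x))"
    by (rule nn_integral_count_space') (use fin in auto)
  also have "\<dots> = ennreal (\<Sum>x\<in>A. ?f x)"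
    by (rule sum_ennreal) (rule nonneg)
  also have "(\<Sum>x\<in>A. ?f x) = (\<Sum>x\<in>A. rank_weight sch (r x)) / ?S"
    by (simp add: sum_divide_distrib)
  also have "(\<Sum>x\<in>A. rank_weight sch (r x)) = ?S"
    using sum.reindex_bij_betw[OF bij, of "rank_weight sch"] by simp
  finally have prob: "(\<integral>\<^sup>+x. ennreal (?f x) \<partial>count_space UNIV) = 1" using Spos by simp
  show ?thesis unfolding rank_select_def
    using pmf_embed_pmf[of ?f, OF nonneg prob] by simp
qed

lemma set_rank_select:
  assumes sch: "sch \<noteq> Tournament" and fin: "finite A" and ne: "A \<noteq> {}"
    and bij: "bij_betw r A {1..card A}"
  shows "set_pmf (rank_select sch A r) \<subseteq> A"
  using rank_select_pmf[OF assms] by (auto simp: set_pmf_eq)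

lemma sum_exp_le: "(\<Sum>j = 1..m. (1/2::real) ^ j) \<le> 1"
proof -
  have "(\<Sum>j = 1..m. (1/2::real) ^ j) = 1 - (1/2) ^ m"
    by (induction m) (auto simp: field_simps)
  then show ?thesis by simp
qed

lemma sum_pow_le: "1 \<le> m \<Longrightarrow> (\<Sum>j = 1..m. 1 / (real j)^2) \<le> 2 - 1 / real m"
proof (induction m rule: dec_induct)
  case base
  then show ?case by simp
next
  case (step m)
  have m: "1 \<le> real m" using step by simp
  have e: "1 / real m - 1 / real (Suc m) = 1 / (real m * real (Suc m))"
    using m by (simp add: field_simps)
  have "real m * real (Suc m) \<le> (real (Suc m))^2" by (simp add: power2_eq_square)
  then have "1 / (real (Suc m))^2 \<le> 1 / (real m * real (Suc m))"
    using m by (intro divide_left_mono) auto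
  then have "1 / (real (Suc m))^2 \<le> 1 / real m - 1 / real (Suc m)" using e by simp
  then show ?case using step by simp
qed

lemma sum_harm_le: "1 \<le> m \<Longrightarrow> (\<Sum>j = 1..m. 1 / real j) \<le> 1 + ln (real m)"
proof -
  assume m: "1 \<le> m"
  have "harm m - ln (real m) \<le> harm 1 - ln (real (1::nat))"
    using euler_mascheroni_sequence_decreasing[of 1 m] m by simp
  moreover have "harm (1::nat) = (1::real)" by (simp add: harm_def)
  moreover have "harm m = (\<Sum>j = 1..m. 1 / real j)" by (simp add: harm_def divide_inverse)
  ultimately show ?thesis by simp
qed

definition selb :: "scheme \<Rightarrow> nat \<Rightarrow> real" where
  "selb sch n = (case sch of Exponential \<Rightarrow> 1/8 | PowerLaw \<Rightarrow> 1/18 | Tournament \<Rightarrow> 1/512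
     | Harmonic \<Rightarrow> 1 / (3 * (1 + ln (real n + 1))))"

lemma selb_pos: "0 < selb sch n"
  by (cases sch) (auto simp: selb_def add_pos_nonneg)

lemma selb_le1: "selb sch n \<le> 1"
proof (cases sch)
  case Harmonic
  have "0 \<le> ln (real n + 1)" by simp
  then have h: "1 \<le> 3 * (1 + ln (real n + 1))" by simp
  have pos: "0 < 3 * (1 + ln (real n + 1)) * 1" using h by linarith
  have "1 / (3 * (1 + ln (real n + 1))) \<le> 1 / 1"
    by (rule divide_left_mono[OF h _ pos]) simp
  then show ?thesis using Harmonic by (simp add: selb_def)
qed (auto simp: selb_def)

lemma rank_sel_lb:
  assumes sch: "sch \<noteq> Tournament" and fin: "finite A" and ne: "A \<noteq> {}"
    and bij: "bij_betw r A {1..card A}" and y: "y \<in> A" "r y \<le> 3" and cA: "card A \<le> Suc n"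
  shows "selb sch n \<le> pmf (rank_select sch A r) y"
proof -
  let ?S = "\<Sum>j = 1..card A. rank_weight sch j"
  have c1: "1 \<le> card A" using fin ne by (simp add: Suc_le_eq card_gt_0_iff)
  have "rank_weight sch 1 \<le> ?S"
    by (rule member_le_sum) (use c1 weight_nonneg in auto)
  then have Spos: "0 < ?S" using weight_pos1[OF sch] by linarith
  have r1: "1 \<le> r y" using bij y unfolding bij_betw_def by auto
  have eq: "pmf (rank_select sch A r) y = rank_weight sch (r y) / ?S"
    using rank_select_pmf[OF assms(1-4)] y by simp
  show ?thesis
  proof (cases sch)
    case Exponential
    have "(1/2::real)^3 \<le> (1/2)^(r y)" using y r1 by (intro power_decreasing) auto
    moreover have "rank_weight sch (r y) = (1/2)^(r y)" using Exponential by simp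
    moreover have "(1/2::real)^3 = 1/8" by (simp add: power_divide)
    ultimately have w: "1/8 \<le> rank_weight sch (r y)" by linarith
    have "?S \<le> 1" using Exponential sum_exp_le by simp
    have "rank_weight sch (r y) \<le> rank_weight sch (r y) / ?S"
      using Spos \<open>?S \<le> 1\<close> weight_nonneg[of sch "r y"]
      by (simp add: le_divide_eq mult_left_le)
    then have "1/8 \<le> rank_weight sch (r y) / ?S" using w by linarith
    then show ?thesis using eq Exponential by (simp add: selb_def)
  next
    case PowerLaw
    have "real (r y) \<le> 3" using y by simp
    then have "real (r y) ^ 2 \<le> 3 ^ 2" by (intro power_mono) auto
    then have "real (r y) ^ 2 \<le> 9" by simp
    then have w: "1/9 \<le> rank_weight sch (r y)" using PowerLaw r1 by (simp add: field_simps)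
    have z: "0 \<le> 1 / real (card A)" by simp
    have "?S \<le> 2 - 1 / real (card A)" using PowerLaw sum_pow_le[OF c1] by simp
    then have "?S \<le> 2" using z by linarith
    then have "1/18 \<le> rank_weight sch (r y) / ?S" using w Spos by (simp add: field_simps)
    then show ?thesis using eq PowerLaw by (simp add: selb_def)
  next
    case Harmonic
    have w: "1/3 \<le> rank_weight sch (r y)" using Harmonic r1 y by (simp add: field_simps)
    have "?S \<le> 1 + ln (real (card A))" using Harmonic sum_harm_le[OF c1] by simp
    also have "\<dots> \<le> 1 + ln (real n + 1)" using cA c1 by simp
    finally have S: "?S \<le> 1 + ln (real n + 1)" .
    have "1 / (3 * (1 + ln (real n + 1))) \<le> (1/3) / ?S"
      using S Spos by (simp add: field_simps)
    also have "\<dots> \<le> rank_weight sch (r y) / ?S" using w Spos by (intro divide_right_mono) auto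
    finally show ?thesis using eq Harmonic by (simp add: selb_def)
  qed (use sch in simp)
qed

lemma one_minus_exp: "0 \<le> (x::real) \<Longrightarrow> x \<le> 1/2 \<Longrightarrow> exp (- 2 * x) \<le> 1 - x"
proof -
  assume x: "0 \<le> x" "x \<le> 1/2"
  have "- x - 2 * x\<^sup>2 \<le> ln (1 - x)" by (rule ln_one_minus_pos_lower_bound[OF x])
  moreover have "x * (2 * x) \<le> x * 1" by (rule mult_left_mono) (use x in auto)
  then have "- 2 * x \<le> - x - 2 * x\<^sup>2" by (simp add: power2_eq_square)
  ultimately have "- 2 * x \<le> ln (1 - x)" by linarith
  then have "exp (- 2 * x) \<le> exp (ln (1 - x))" by simp
  also have "\<dots> = 1 - x" using x by simp
  finally show ?thesis .
qed

lemma tour_num: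
  fixes a m :: nat
  assumes a1: "1 \<le> a" and am: "a \<le> m" and ma: "m \<le> a + 2"
  shows "1/512 \<le> (real a / real m) ^ m - ((real a - 1) / real m) ^ m"
proof -
  have m1: "1 \<le> real m" using a1 am by simp
  let ?q = "real a / real m"
  let ?t = "1 - 1 / real a"
  have t0: "0 \<le> ?t" and t1: "?t \<le> 1" using a1 by auto
  have eq: "(real a - 1) / real m = ?q * ?t" using a1 m1 by (simp add: field_simps)
  have "?t ^ m \<le> ?t ^ a" by (rule power_decreasing[OF am t0 t1])
  also have "?t \<le> exp (- (1 / real a))" using exp_ge_add_one_self[of "- (1 / real a)"] by simp
  then have "?t ^ a \<le> exp (- (1 / real a)) ^ a" by (rule power_mono) (use t0 in simp)
  also have "exp (- (1 / real a)) ^ a = exp (-1)"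
    using a1 by (simp add: exp_of_nat_mult[symmetric])
  also have "exp (-1::real) \<le> 1/2"
  proof -
    have "2 \<le> exp (1::real)" using exp_ge_add_one_self[of "1::real"] by simp
    then show ?thesis by (simp add: exp_minus field_simps)
  qed
  finally have tm: "?t ^ m \<le> 1/2" .
  have q0: "0 \<le> ?q" by simp
  have qm: "1/256 \<le> ?q ^ m"
  proof (cases "m \<le> 4")
    case True
    have "1/4 \<le> ?q" using a1 True m1 by (simp add: field_simps)
    then have "(1/4) ^ m \<le> ?q ^ m" by (rule power_mono) simp
    moreover have "(1/4::real) ^ 4 \<le> (1/4) ^ m" by (rule power_decreasing) (use True in auto)
    moreover have "(1/4::real)^4 = 1/256" by (simp add: power_divide)
    ultimately show ?thesis by linarith
  next
    case False
    let ?x = "2 / real m"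
    have x0: "0 \<le> ?x" and x1: "?x \<le> 1/2" using False by auto
    have "real m - 2 \<le> real a" using ma by simp
    then have "(real m - 2) / real m \<le> real a / real m" by (rule divide_right_mono) simp
    moreover have "1 - ?x = (real m - 2) / real m" using m1 by (simp add: field_simps)
    ultimately have "1 - ?x \<le> ?q" by simp
    have "exp (- 2 * ?x) \<le> ?q" using one_minus_exp[OF x0 x1] \<open>1 - ?x \<le> ?q\<close> by linarith
    then have "exp (- 2 * ?x) ^ m \<le> ?q ^ m" by (rule power_mono) simp
    moreover have "exp (- 2 * ?x) ^ m = exp (-4)"
      using m1 by (simp add: exp_of_nat_mult[symmetric])
    moreover have "1/256 \<le> exp (-4::real)"
    proof -
      have "exp (4::real) = exp 1 ^ 4" by (simp add: exp_of_nat_mult[symmetric])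
      also have "\<dots> \<le> 3 ^ 4" by (rule power_mono[OF exp_le]) simp
      finally have "exp (4::real) \<le> 256" by simp
      then show ?thesis by (simp add: exp_minus field_simps)
    qed
    ultimately show ?thesis by linarith
  qed
  have "((real a - 1) / real m) ^ m = (?q * ?t) ^ m" by (simp only: eq)
  also have "\<dots> = ?q ^ m * ?t ^ m" by (rule power_mult_distrib)
  also have "\<dots> \<le> ?q ^ m * (1/2)" by (rule mult_left_mono[OF tm]) simp
  finally show ?thesis using qm by linarith
qed

lemma set_draws: "finite P \<Longrightarrow> P \<noteq> {} \<Longrightarrow> xs \<in> set_pmf (draws P k) \<Longrightarrow> set xs \<subseteq> P \<and> length xs = k"
  by (induction k arbitrary: xs) force+

lemma draws_sub:
  assumes fin: "finite P" and ne: "P \<noteq> {}"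
  shows "emeasure (measure_pmf (draws P k)) {xs. set xs \<subseteq> A} = ennreal ((real (card (P \<inter> A)) / real (card P)) ^ k)"
proof (induction k)
  case 0
  then show ?case by (simp add: emeasure_return_pmf indicator_def)
next
  case (Suc k)
  let ?q = "real (card (P \<inter> A)) / real (card P)"
  have cp: "0 < card P" using fin ne by (simp add: card_gt_0_iff)
  have pre: "\<And>x. (\<lambda>xs. x # xs) -` {xs. set xs \<subseteq> A} = (if x \<in> A then {xs. set xs \<subseteq> A} else {})"
    by auto
  have "emeasure (measure_pmf (draws P (Suc k))) {xs. set xs \<subseteq> A}
      = (\<Sum>x\<in>P. emeasure (measure_pmf (draws P k)) ((\<lambda>xs. x # xs) -` {xs. set xs \<subseteq> A})) / of_nat (card P)"
    by (simp add: nn_integral_pmf_of_set[OF ne fin])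
  also have "(\<Sum>x\<in>P. emeasure (measure_pmf (draws P k)) ((\<lambda>xs. x # xs) -` {xs. set xs \<subseteq> A}))
      = (\<Sum>x\<in>P. ennreal (if x \<in> A then ?q ^ k else 0))"
    by (rule sum.cong) (auto simp: pre Suc)
  also have "\<dots> = ennreal (\<Sum>x\<in>P. (if x \<in> A then ?q ^ k else 0))"
    by (rule sum_ennreal) simp
  also have "(\<Sum>x\<in>P. (if x \<in> A then ?q ^ k else 0)) = real (card (P \<inter> A)) * ?q ^ k"
    using fin by (simp add: sum.If_cases Int_def)
  also have "ennreal (real (card (P \<inter> A)) * ?q ^ k) / of_nat (card P) = ennreal (?q ^ Suc k)"
    using cp by (simp add: ennreal_of_nat_eq_real_of_nat divide_ennreal field_simps)
  finally show ?case .
qed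

lemma draws_sub_measure:
  assumes fin: "finite P" and ne: "P \<noteq> {}"
  shows "measure_pmf.prob (draws P k) {xs. set xs \<subseteq> A} = (real (card (P \<inter> A)) / real (card P)) ^ k"
proof -
  have "ennreal (measure_pmf.prob (draws P k) {xs. set xs \<subseteq> A}) = ennreal ((real (card (P \<inter> A)) / real (card P)) ^ k)"
    using draws_sub[OF fin ne, of k A] by (simp add: measure_pmf.emeasure_eq_measure)
  then show ?thesis by (subst (asm) ennreal_inj) auto
qed

lemma tournament_lb:
  assumes fin: "finite A" and ne: "A \<noteq> {}" and bij: "bij_betw r A {1..card A}"
    and y: "y \<in> A" "r y \<le> 3"
  shows "1/512 \<le> pmf (tournament_select A r) y"
proof -
  let ?m = "card A"
  define B where "B = {x\<in>A. r x \<in> {1..<r y}}"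
  define A0 where "A0 = A - B"
  have ry: "1 \<le> r y" "r y \<le> ?m" using bij y unfolding bij_betw_def by auto
  have "{1..<r y} \<subseteq> {1..card A}" using ry by auto
  from card_pre_bij[OF bij this] have cB: "card B = r y - 1" unfolding B_def by simp
  have BA: "B \<subseteq> A" unfolding B_def by auto
  have finB: "finite B" using finite_subset[OF BA fin] .
  have cA0: "card A0 = ?m - (r y - 1)" unfolding A0_def using card_Diff_subset[OF finB BA] cB by simp
  have yA0: "y \<in> A0" unfolding A0_def B_def using y by auto
  have finA0: "finite A0" unfolding A0_def using fin by simp
  define a where "a = card A0"
  have a1: "1 \<le> a" unfolding a_def using yA0 finA0 by (metis One_nat_def Suc_leI card_gt_0_iff empty_iff)
  have am: "a \<le> ?m" unfolding a_def using cA0 by simp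
  have ma: "?m \<le> a + 2" unfolding a_def using cA0 y ry by simp
  have c1: "card (A \<inter> A0) = a" unfolding a_def A0_def by (simp add: Int_absorb1 Int_Diff)
  have c2: "card (A \<inter> (A0 - {y})) = a - 1"
  proof -
    have "A \<inter> (A0 - {y}) = A0 - {y}" unfolding A0_def by auto
    then show ?thesis using yA0 finA0 unfolding a_def by simp
  qed
  let ?D = "draws A ?m"
  let ?E1 = "{xs. set xs \<subseteq> A0}"
  let ?E2 = "{xs. set xs \<subseteq> A0 - {y}}"
  have m1: "measure_pmf.prob ?D ?E1 = (real a / real ?m) ^ ?m"
    using draws_sub_measure[OF fin ne, of ?m A0] c1 by simp
  have m2: "measure_pmf.prob ?D ?E2 = ((real a - 1) / real ?m) ^ ?m"
    using draws_sub_measure[OF fin ne, of ?m "A0 - {y}"] c2 a1 by (simp add: of_nat_diff)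
  have sub: "?E1 - ?E2 \<subseteq> arg_min_list r -` {y}"
  proof
    fix xs assume xs: "xs \<in> ?E1 - ?E2"
    then have s: "set xs \<subseteq> A0" and yx: "y \<in> set xs" by auto
    then have xne: "xs \<noteq> []" by auto
    let ?z = "arg_min_list r xs"
    have zin: "?z \<in> set xs" by (rule arg_min_list_in[OF xne])
    have "r ?z = Min (r ` set xs)" by (rule f_arg_min_list_f[OF xne])
    also have "\<dots> \<le> r y" using yx by simp
    finally have le: "r ?z \<le> r y" .
    have zA0: "?z \<in> A0" using zin s by auto
    then have zA: "?z \<in> A" and zB: "?z \<notin> B" unfolding A0_def by auto
    have "1 \<le> r ?z" using bij zA unfolding bij_betw_def by auto
    then have "r ?z = r y" using zB zA le unfolding B_def by auto
    then have "?z = y" using bij zA y unfolding bij_betw_def inj_on_def by blast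
    then show "xs \<in> arg_min_list r -` {y}" by simp
  qed
  have "measure_pmf.prob ?D (?E1 - ?E2) = measure_pmf.prob ?D ?E1 - measure_pmf.prob ?D ?E2"
    by (rule measure_pmf.finite_measure_Diff) auto
  also have "\<dots> \<ge> 1/512" using m1 m2 tour_num[OF a1 am ma] by simp
  finally have "1/512 \<le> measure_pmf.prob ?D (?E1 - ?E2)" .
  also have "\<dots> \<le> measure_pmf.prob ?D (arg_min_list r -` {y})"
    by (rule measure_pmf.finite_measure_mono[OF sub]) simp
  also have "\<dots> = pmf (tournament_select A r) y"
    unfolding tournament_select_def by (simp add: pmf_map)
  finally show ?thesis .
qed

lemma set_tournament:
  assumes fin: "finite A" and ne: "A \<noteq> {}"
  shows "set_pmf (tournament_select A r) \<subseteq> A"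
proof
  fix z assume "z \<in> set_pmf (tournament_select A r)"
  then obtain xs where xs: "xs \<in> set_pmf (draws A (card A))" "z = arg_min_list r xs"
    unfolding tournament_select_def by auto
  have "set xs \<subseteq> A" "length xs = card A" using set_draws[OF fin ne xs(1)] by auto
  moreover have "card A \<noteq> 0" using fin ne by simp
  ultimately have "xs \<noteq> []" by auto
  then show "z \<in> A" using arg_min_list_in xs \<open>set xs \<subseteq> A\<close> by blast
qed

lemma parent_sel:
  assumes p': "is_population n A" and bij: "bij_betw r A {1..card A}"
  shows "set_pmf (parent_select sch A r) \<subseteq> A"
    and "y \<in> A \<Longrightarrow> r y \<le> 3 \<Longrightarrow> card A \<le> Suc n \<Longrightarrow> selb sch n \<le> pmf (parent_select sch A r) y"
proof -
  have fin: "finite A" and ne: "A \<noteq> {}" using pop_finite[OF p'] pop_ne[OF p'] by auto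
  show "set_pmf (parent_select sch A r) \<subseteq> A"
  proof (cases "sch = Tournament")
    case True
    then show ?thesis using set_tournament[OF fin ne] by (simp add: parent_select_def)
  next
    case False
    then show ?thesis using set_rank_select[OF False fin ne bij] by (simp add: parent_select_def)
  qed
  assume y: "y \<in> A" "r y \<le> 3" and cA: "card A \<le> Suc n"
  show "selb sch n \<le> pmf (parent_select sch A r) y"
  proof (cases "sch = Tournament")
    case True
    then show ?thesis using tournament_lb[OF fin ne bij y] by (simp add: parent_select_def selb_def)
  next
    case False
    then show ?thesis using rank_sel_lb[OF False fin ne bij y cA] by (simp add: parent_select_def)
  qed
qed

lemma prob_bind_point:
  "pmf S y * measure_pmf.prob (N y) E \<le> measure_pmf.prob (bind_pmf S N) E"
proof -
  have i: "(\<integral>\<^sup>+s. ennreal (measure_pmf.prob (N y) E) * indicator {y} s \<partial>S) = ennreal (measure_pmf.prob (N y) E) * emeasure S {y}"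
    by (rule nn_integral_cmult_indicator) simp
  have "ennreal (pmf S y * measure_pmf.prob (N y) E) = (\<integral>\<^sup>+s. ennreal (measure_pmf.prob (N y) E) * indicator {y} s \<partial>S)"
    unfolding i emeasure_pmf_single by (simp add: ennreal_mult mult.commute)
  also have "\<dots> \<le> (\<integral>\<^sup>+s. emeasure (N s) E \<partial>S)"
    by (rule nn_integral_mono) (auto simp: indicator_def measure_pmf.emeasure_eq_measure)
  also have "\<dots> = emeasure (bind_pmf S N) E" by simp
  also have "\<dots> = ennreal (measure_pmf.prob (bind_pmf S N) E)" by (simp add: measure_pmf.emeasure_eq_measure)
  finally show ?thesis by (subst (asm) ennreal_le_iff) auto
qed

lemma prob_bind_all:
  assumes "\<And>s. s \<in> set_pmf S \<Longrightarrow> c \<le> measure_pmf.prob (N s) E" and c: "0 \<le> c"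
  shows "c \<le> measure_pmf.prob (bind_pmf S N) E"
proof -
  have "ennreal c = (\<integral>\<^sup>+s. ennreal c \<partial>S)" by simp
  also have "\<dots> \<le> (\<integral>\<^sup>+s. emeasure (N s) E \<partial>S)"
    by (rule nn_integral_mono_AE) (auto intro!: AE_pmfI simp: measure_pmf.emeasure_eq_measure assms(1))
  also have "\<dots> = emeasure (bind_pmf S N) E" by simp
  also have "\<dots> = ennreal (measure_pmf.prob (bind_pmf S N) E)" by (simp add: measure_pmf.emeasure_eq_measure)
  finally show ?thesis using c by (subst (asm) ennreal_le_iff) auto
qed

lemma prob_map_point:
  assumes "f t \<in> E"
  shows "pmf M t \<le> measure_pmf.prob (map_pmf f M) E"
proof -
  have "pmf M t = measure_pmf.prob M {t}" by (simp add: measure_pmf_single)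
  also have "\<dots> \<le> measure_pmf.prob M (f -` E)"
    by (rule measure_pmf.finite_measure_mono) (use assms in auto)
  finally show ?thesis by simp
qed

lemma step_support:
  assumes p: "is_population n P" and vr: "valid_ranking n score rk"
    and Q: "Q \<in> set_pmf (gsemo_step n sch rk P)"
  shows "is_population n Q \<and> Phi n P \<le> Phi n Q"
proof -
  let ?P' = "front_of P"
  have p': "is_population n ?P'" by (rule front_pop[OF p])
  have bij: "bij_betw (rk ?P') ?P' {1..card ?P'}" using vr p' unfolding valid_ranking_def by blast
  obtain s s' where s: "s \<in> set_pmf (parent_select sch ?P' (rk ?P'))" and s': "s' \<in> set_pmf (mutate n s)"
    and Qe: "Q = update P s'"
    using Q unfolding gsemo_step_def Let_def by auto
  have "s \<in> P" using parent_sel(1)[OF p' bij] s front_sub by blast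
  then have "length s' = n" using set_mutate[OF s'] pop_lengths[OF p] by simp
  then show ?thesis using update_pop[OF p] Phi_mono[OF p] Qe by simp
qed

lemma step_progress:
  assumes p: "is_population n P" and n2: "2 \<le> n" and nf: "\<not> finished n P"
    and df: "diversity_favouring n score (inner_strings n)" and vr: "valid_ranking n score rk"
  shows "selb sch n * (exp (-1) / real n) \<le> measure_pmf.prob (gsemo_step n sch rk P) {Q. Phi n P < Phi n Q}"
proof -
  let ?P' = "front_of P"
  let ?S = "parent_select sch ?P' (rk ?P')"
  let ?N = "\<lambda>s. map_pmf (update P) (mutate n s)"
  let ?E = "{Q. Phi n P < Phi n Q}"
  have p': "is_population n ?P'" by (rule front_pop[OF p])
  have bij: "bij_betw (rk ?P') ?P' {1..card ?P'}" using vr p' unfolding valid_ranking_def by blast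
  have eq: "gsemo_step n sch rk P = bind_pmf ?S ?N" unfolding gsemo_step_def Let_def by simp
  have c0: "0 \<le> exp (-1) / real n" by simp
  have sb: "0 < selb sch n" "selb sch n \<le> 1" using selb_pos selb_le1 by auto
  show ?thesis
  proof (cases "P \<inter> pareto_set n = {}")
    case True
    have "exp (-1) / real n \<le> measure_pmf.prob (bind_pmf ?S ?N) ?E"
    proof (rule prob_bind_all[OF _ c0])
      fix s assume "s \<in> set_pmf ?S"
      then have sP': "s \<in> ?P'" using parent_sel(1)[OF p' bij] by blast
      have sprop: "s \<notin> pareto_set n" "Lval s = Max (Lval ` P)" "length s = n"
        using front_phase1[OF p True sP'] by auto
      let ?t = "s[LO s := True]"
      have t: "hdist s ?t = 1" "LO s < LO ?t" "TZ ?t = TZ s" "length ?t = n"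
        using improve_nonpareto[OF sprop(3,1)] by auto
      have "Max (Lval ` P) < Lval ?t" using t sprop(2) unfolding Lval_def by simp
      then have "update P ?t \<in> ?E" using improve1[OF p t(4)] by simp
      then have "pmf (mutate n s) ?t \<le> measure_pmf.prob (?N s) ?E" by (rule prob_map_point)
      moreover have "exp (-1) / real n \<le> pmf (mutate n s) ?t" using mutate_one[OF n2 sprop(3) t(4) t(1)] .
      ultimately show "exp (-1) / real n \<le> measure_pmf.prob (?N s) ?E" by linarith
    qed
    moreover have "selb sch n * (exp (-1) / real n) \<le> exp (-1) / real n"
      by (rule mult_left_le_one_le) (use sb c0 in auto)
    ultimately show ?thesis using eq by simp
  next
    case False
    obtain y z where y: "y \<in> ?P'" and z: "z \<in> pareto_set n" "z \<notin> P" "hdist y z = 1" "rk ?P' y \<le> 3"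
      using phase2_target[OF p False nf n2 df vr] by blast
    have yl: "length y = n" using pop_lengths[OF p'] y by simp
    have zl: "length z = n" using z pareto_LO_TZ by blast
    have sel: "selb sch n \<le> pmf ?S y"
      using parent_sel(2)[OF p' bij y z(4) card_front[OF p]] .
    have "update P z \<in> ?E" using improve2[OF p z(1,2)] by simp
    then have "pmf (mutate n y) z \<le> measure_pmf.prob (?N y) ?E" by (rule prob_map_point)
    moreover have "exp (-1) / real n \<le> pmf (mutate n y) z" using mutate_one[OF n2 yl zl z(3)] .
    ultimately have m: "exp (-1) / real n \<le> measure_pmf.prob (?N y) ?E" by linarith
    have "selb sch n * (exp (-1) / real n) \<le> pmf ?S y * measure_pmf.prob (?N y) ?E"
      by (rule mult_mono[OF sel m]) (use sb c0 in auto)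
    also have "\<dots> \<le> measure_pmf.prob (bind_pmf ?S ?N) ?E" by (rule prob_bind_point)
    finally show ?thesis using eq by simp
  qed
qed

definition stepF :: "nat \<Rightarrow> scheme \<Rightarrow> (bool list set \<Rightarrow> bool list \<Rightarrow> nat) \<Rightarrow> bool list set \<Rightarrow> bool list set pmf" where
  "stepF n sch rk P = (if finished n P then return_pmf P else gsemo_step n sch rk P)"

lemma state_dist_Suc': "state_dist n sch rk (Suc t) = bind_pmf (state_dist n sch rk t) (stepF n sch rk)"
  by (simp add: stepF_def[abs_def])

lemma finite_len: "finite {x :: bool list. length x = n}"
  using finite_lists_length_eq[of "UNIV :: bool set" n] by simp

lemma pop_inv:
  assumes vr: "valid_ranking n score rk"
  shows "P \<in> set_pmf (state_dist n sch rk t) \<Longrightarrow> is_population n P"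
proof (induction t arbitrary: P)
  case 0
  have ne: "{x :: bool list. length x = n} \<noteq> {}" by (metis (mono_tags) empty_Collect_eq length_replicate)
  from 0 obtain s where "length s = n" "P = {s}"
    unfolding state_dist.simps init_pop_def using set_pmf_of_set[OF ne finite_len] by auto
  then show ?case unfolding is_population_def by auto
next
  case (Suc t)
  then obtain P0 where P0: "P0 \<in> set_pmf (state_dist n sch rk t)" "P \<in> set_pmf (stepF n sch rk P0)"
    unfolding state_dist_Suc' by auto
  have p0: "is_population n P0" using Suc.IH[OF P0(1)] .
  show ?case
  proof (cases "finished n P0")
    case True
    then show ?thesis using P0 p0 by (simp add: stepF_def)
  next
    case False
    then show ?thesis using P0 step_support[OF p0 vr] by (simp add: stepF_def)
  qed
qed

lemma Phi_lt:
  assumes p: "is_population n P" and nf: "\<not> finished n P"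
  shows "Phi n P \<le> 2 * n"
proof -
  obtain i where i: "i \<le> n" "pt n i \<notin> P" using not_finished_missing[OF p nf] by blast
  have "P \<inter> pareto_set n \<subset> pareto_set n" using i pt_in_pareto[OF i(1)] by blast
  then have "card (P \<inter> pareto_set n) < card (pareto_set n)" by (rule psubset_card_mono[OF finite_pareto])
  then have "card (P \<inter> pareto_set n) \<le> n" using card_pareto[of n] by simp
  then show ?thesis using MaxL_le[OF p] unfolding Phi_def by linarith
qed

lemma ennreal_minus1:
  assumes "1 \<le> (x::real)" shows "ennreal (x - 1) + 1 = ennreal x"
proof -
  have "ennreal (x - 1) + ennreal 1 = ennreal (x - 1 + 1)" by (rule ennreal_plus[symmetric]) (use assms in auto)
  then show ?thesis by simp
qed

definition V :: "nat \<Rightarrow> real \<Rightarrow> bool list set \<Rightarrow> ennreal" where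
  "V n p P = (if finished n P then 0 else ennreal ((real (2 * n + 1) - real (Phi n P)) / p))"

lemma per_state:
  assumes p: "is_population n P" and n2: "2 \<le> n"
    and df: "diversity_favouring n score (inner_strings n)" and vr: "valid_ranking n score rk"
    and pd: "pr = selb sch n * (exp (-1) / real n)"
  shows "(\<integral>\<^sup>+Q. V n pr Q \<partial>stepF n sch rk P) + ennreal (if finished n P then 0 else 1) \<le> V n pr P"
proof (cases "finished n P")
  case True
  then show ?thesis by (simp add: stepF_def)
next
  case nf: False
  let ?K = "real (2 * n + 1)"
  let ?G = "gsemo_step n sch rk P"
  let ?E = "{Q. Phi n P < Phi n Q}"
  have pr0: "0 < pr" using pd selb_pos[of sch n] n2 by simp
  have pr1: "pr \<le> 1"
  proof -
    have "exp (-1::real) \<le> 1" by simp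
    also have "1 \<le> real n" using n2 by simp
    finally have "exp (-1) / real n \<le> 1" using n2 by (simp add: divide_le_eq_1)
    moreover have "selb sch n \<le> 1" "0 \<le> exp (-1) / real n" using selb_le1 by auto
    ultimately have "selb sch n * (exp (-1) / real n) \<le> 1" using selb_pos[of sch n] by (intro mult_le_one) auto
    then show ?thesis using pd by simp
  qed
  have prog: "pr \<le> measure_pmf.prob ?G ?E" using step_progress[OF p n2 nf df vr] pd by simp
  have PhiK: "real (Phi n P) + 1 \<le> ?K" using Phi_lt[OF p nf] by simp
  define b where "b = (?K - real (Phi n P) - 1) / pr"
  define c where "c = 1 / pr"
  have b0: "0 \<le> b" unfolding b_def using PhiK pr0 by simp
  have c0: "0 \<le> c" unfolding c_def using pr0 by simp
  have pointwise: "V n pr Q \<le> ennreal b + ennreal c * indicator (- ?E) Q" if Q: "Q \<in> set_pmf ?G" for Q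
  proof -
    have q: "is_population n Q" "Phi n P \<le> Phi n Q" using step_support[OF p vr Q] by auto
    have "(?K - real (Phi n Q)) / pr \<le> b + c * indicator (- ?E) Q"
    proof (cases "Q \<in> ?E")
      case True
      then have "real (Phi n P) + 1 \<le> real (Phi n Q)" by simp
      then have "(?K - real (Phi n Q)) / pr \<le> b" unfolding b_def using pr0 by (intro divide_right_mono) auto
      then show ?thesis using True by simp
    next
      case False
      have "(?K - real (Phi n Q)) / pr \<le> (?K - real (Phi n P)) / pr" using q(2) pr0 by (intro divide_right_mono) auto
      also have "\<dots> = b + c" unfolding b_def c_def using pr0 by (simp add: field_simps)
      finally show ?thesis using False by simp
    qed
    then have "ennreal ((?K - real (Phi n Q)) / pr) \<le> ennreal (b + c * indicator (- ?E) Q)" by (rule ennreal_leI)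
    also have "\<dots> = ennreal b + ennreal c * indicator (- ?E) Q"
      using b0 c0 by (simp add: ennreal_plus ennreal_mult indicator_def)
    finally show ?thesis unfolding V_def by simp
  qed
  have "(\<integral>\<^sup>+Q. V n pr Q \<partial>?G) \<le> (\<integral>\<^sup>+Q. ennreal b + ennreal c * indicator (- ?E) Q \<partial>?G)"
    by (rule nn_integral_mono_AE) (auto intro!: AE_pmfI pointwise)
  also have "\<dots> = ennreal b + ennreal c * emeasure ?G (- ?E)"
    by (simp add: nn_integral_add nn_integral_cmult_indicator measure_pmf.emeasure_space_1)
  also have "emeasure ?G (- ?E) = ennreal (1 - measure_pmf.prob ?G ?E)"
    using measure_pmf.prob_compl[of ?E ?G] by (simp add: measure_pmf.emeasure_eq_measure Compl_eq_Diff_UNIV)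
  also have "ennreal b + ennreal c * ennreal (1 - measure_pmf.prob ?G ?E) = ennreal (b + c * (1 - measure_pmf.prob ?G ?E))"
    using b0 c0 by (simp add: ennreal_plus ennreal_mult measure_pmf.prob_le_1)
  also have "\<dots> \<le> ennreal (b + c * (1 - pr))"
    by (rule ennreal_leI) (use prog c0 in \<open>simp add: mult_left_mono\<close>)
  also have "b + c * (1 - pr) = (?K - real (Phi n P)) / pr - 1"
    unfolding b_def c_def using pr0 by (simp add: field_simps)
  finally have I: "(\<integral>\<^sup>+Q. V n pr Q \<partial>?G) \<le> ennreal ((?K - real (Phi n P)) / pr - 1)" .
  have ge1: "1 \<le> (?K - real (Phi n P)) / pr"
  proof -
    have "pr \<le> ?K - real (Phi n P)" using pr1 PhiK by linarith
    then show ?thesis using pr0 by (simp add: le_divide_eq)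
  qed
  have "(\<integral>\<^sup>+Q. V n pr Q \<partial>stepF n sch rk P) + ennreal (if finished n P then 0 else 1)
      = (\<integral>\<^sup>+Q. V n pr Q \<partial>?G) + 1" using nf by (simp add: stepF_def)
  also have "\<dots> \<le> ennreal ((?K - real (Phi n P)) / pr - 1) + 1" using I by (rule add_right_mono)
  also have "\<dots> = ennreal ((?K - real (Phi n P)) / pr)"
    by (rule ennreal_minus1[OF ge1])
  also have "\<dots> = V n pr P" using nf by (simp add: V_def)
  finally show ?thesis .
qed

lemma exp_time_bound:
  assumes n2: "2 \<le> n"
    and df: "diversity_favouring n score (inner_strings n)" and vr: "valid_ranking n score rk"
    and pd: "pr = selb sch n * (exp (-1) / real n)"
  shows "expected_time n sch rk \<le> ennreal (real (2 * n + 1) / pr)"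
proof -
  let ?D = "state_dist n sch rk"
  define E where "E t = (\<integral>\<^sup>+P. V n pr P \<partial>?D t)" for t
  define q where "q t = ennreal (measure_pmf.prob (?D t) {P. \<not> finished n P})" for t
  have pr0: "0 < pr" using pd selb_pos[of sch n] n2 by simp
  have step: "E (Suc t) + q t \<le> E t" for t
  proof -
    have "q t = emeasure (?D t) {P. \<not> finished n P}" unfolding q_def by (simp add: measure_pmf.emeasure_eq_measure)
    also have "\<dots> = (\<integral>\<^sup>+P. indicator {P. \<not> finished n P} P \<partial>?D t)" by simp
    also have "\<dots> = (\<integral>\<^sup>+P. ennreal (if finished n P then 0 else 1) \<partial>?D t)"
      by (rule nn_integral_cong) (simp add: indicator_def)
    finally have qe: "q t = (\<integral>\<^sup>+P. ennreal (if finished n P then 0 else 1) \<partial>?D t)" .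
    have "E (Suc t) = (\<integral>\<^sup>+P. (\<integral>\<^sup>+Q. V n pr Q \<partial>stepF n sch rk P) \<partial>?D t)"
      unfolding E_def state_dist_Suc' by simp
    then have "E (Suc t) + q t = (\<integral>\<^sup>+P. (\<integral>\<^sup>+Q. V n pr Q \<partial>stepF n sch rk P) + ennreal (if finished n P then 0 else 1) \<partial>?D t)"
      using qe by (simp add: nn_integral_add)
    also have "\<dots> \<le> E t" unfolding E_def
      by (rule nn_integral_mono_AE, rule AE_pmfI, rule per_state[OF pop_inv[OF vr] n2 df vr pd])
    finally show ?thesis .
  qed
  have partial: "E N + (\<Sum>t<N. q t) \<le> E 0" for N
  proof (induction N)
    case 0
    then show ?case by simp
  next
    case (Suc N)
    have "E (Suc N) + (\<Sum>t<Suc N. q t) = (E (Suc N) + q N) + (\<Sum>t<N. q t)" by (simp add: add_ac)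
    also have "\<dots> \<le> E N + (\<Sum>t<N. q t)" by (rule add_right_mono[OF step])
    also have "\<dots> \<le> E 0" by (rule Suc.IH)
    finally show ?case .
  qed
  have E0: "E 0 \<le> ennreal (real (2 * n + 1) / pr)"
  proof -
    have "E 0 \<le> (\<integral>\<^sup>+P. ennreal (real (2 * n + 1) / pr) \<partial>?D 0)" unfolding E_def
    proof (rule nn_integral_mono)
      fix P
      have "(real (2 * n + 1) - real (Phi n P)) / pr \<le> real (2 * n + 1) / pr"
        using pr0 by (intro divide_right_mono) auto
      then show "V n pr P \<le> ennreal (real (2 * n + 1) / pr)" unfolding V_def by (auto intro: ennreal_leI)
    qed
    also have "\<dots> = ennreal (real (2 * n + 1) / pr)" by (simp add: measure_pmf.emeasure_space_1)
    finally show ?thesis .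
  qed
  have "expected_time n sch rk = (\<Sum>t. q t)" unfolding expected_time_def q_def by simp
  also have "\<dots> = (SUP N. \<Sum>t<N. q t)" by (rule suminf_eq_SUP)
  also have "\<dots> \<le> ennreal (real (2 * n + 1) / pr)"
  proof (rule SUP_least)
    fix N
    have "(\<Sum>t<N. q t) \<le> E N + (\<Sum>t<N. q t)" by (simp add: add_increasing)
    also have "\<dots> \<le> E 0" by (rule partial)
    finally show "(\<Sum>t<N. q t) \<le> ennreal (real (2 * n + 1) / pr)" using E0 by simp
  qed
  finally show ?thesis .
qed

lemma exp_m1_ge: "1/3 \<le> exp (-1::real)"
  using exp_le by (simp add: exp_minus field_simps)

lemma final_real:
  assumes n2: "2 \<le> n" and L: "0 < L" "L \<le> selb sch n"
  shows "real (2 * n + 1) / (selb sch n * (exp (-1) / real n)) \<le> 9 * real n ^ 2 / L"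
proof -
  have n0: "0 < real n" using n2 by simp
  have "L * (1 / (3 * real n)) \<le> selb sch n * (exp (-1) / real n)"
  proof (rule mult_mono)
    show "1 / (3 * real n) \<le> exp (-1) / real n" using exp_m1_ge n0 by (simp add: field_simps)
  qed (use L n0 in auto)
  moreover have "0 < L * (1 / (3 * real n))" using L n0 by simp
  moreover have "0 < selb sch n * (exp (-1) / real n)" using L n0 by simp
  ultimately have "real (2 * n + 1) / (selb sch n * (exp (-1) / real n)) \<le> real (2 * n + 1) / (L * (1 / (3 * real n)))"
    by (intro divide_left_mono) (simp_all add: mult_pos_pos del: times_divide_eq_right)
  also have "\<dots> = real (2 * n + 1) * 3 * real n / L" using L n0 by (simp add: field_simps)
  also have "\<dots> \<le> 9 * real n ^ 2 / L"
  proof (rule divide_right_mono)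
    have "real (2 * n + 1) \<le> 3 * real n" using n2 by simp
    then have "real (2 * n + 1) * (3 * real n) \<le> 3 * real n * (3 * real n)" by (rule mult_right_mono) simp
    then show "real (2 * n + 1) * 3 * real n \<le> 9 * real n ^ 2" by (simp add: power2_eq_square algebra_simps)
  qed (use L in simp)
  finally show ?thesis .
qed

lemma ln_bound: "2 \<le> n \<Longrightarrow> 1 + ln (real n + 1) \<le> 4 * ln (real n)"
proof -
  assume n2: "2 \<le> n"
  have "real n * 2 \<le> real n * real n" by (rule mult_left_mono) (use n2 in auto)
  then have "real n + 1 \<le> real n * real n" using n2 by linarith
  then have "ln (real n + 1) \<le> ln (real n * real n)" using n2 by simp
  also have "\<dots> = 2 * ln (real n)" using n2 by (simp add: ln_mult)
  finally have a: "ln (real n + 1) \<le> 2 * ln (real n)" .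
  have "ln (2::real) \<le> ln (real n)" using n2 by simp
  then have "2/3 \<le> ln (real n)" using ln2_ge_two_thirds by linarith
  then show ?thesis using a by linarith
qed

theorem theorem5:
  shows "(\<forall>sch \<in> {Exponential, PowerLaw, Tournament}. \<exists>C>0. \<forall>n\<ge>2.
            \<forall>(score :: bool list \<Rightarrow> bool list set \<Rightarrow> real) rk.
              diversity_favouring n score (inner_strings n) \<and> valid_ranking n score rk \<longrightarrow>
              expected_time n sch rk \<le> ennreal (C * real n ^ 2))
       \<and> (\<exists>C>0. \<forall>n\<ge>2.
            \<forall>(score :: bool list \<Rightarrow> bool list set \<Rightarrow> real) rk.
              diversity_favouring n score (inner_strings n) \<and> valid_ranking n score rk \<longrightarrow>
              expected_time n Harmonic rk \<le> ennreal (C * real n ^ 2 * ln (real n)))"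
proof (intro conjI ballI)
  fix sch :: scheme assume sch: "sch \<in> {Exponential, PowerLaw, Tournament}"
  show "\<exists>C>0. \<forall>n\<ge>2. \<forall>(score :: bool list \<Rightarrow> bool list set \<Rightarrow> real) rk.
              diversity_favouring n score (inner_strings n) \<and> valid_ranking n score rk \<longrightarrow>
              expected_time n sch rk \<le> ennreal (C * real n ^ 2)"
  proof (intro exI[of _ "4608"] conjI allI impI)
    fix n :: nat and score :: "bool list \<Rightarrow> bool list set \<Rightarrow> real" and rk
    assume n2: "2 \<le> n" and h: "diversity_favouring n score (inner_strings n) \<and> valid_ranking n score rk"
    have L: "(0::real) < 1/512" "1/512 \<le> selb sch n" using sch by (auto simp: selb_def)
    have "expected_time n sch rk \<le> ennreal (real (2 * n + 1) / (selb sch n * (exp (-1) / real n)))"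
      using exp_time_bound[OF n2 _ _ refl] h by blast
    also have "\<dots> \<le> ennreal (9 * real n ^ 2 / (1/512))"
      by (rule ennreal_leI[OF final_real[OF n2 L]])
    also have "9 * real n ^ 2 / (1/512) = 4608 * real n ^ 2" by simp
    finally show "expected_time n sch rk \<le> ennreal (4608 * real n ^ 2)" .
  qed simp
next
  show "\<exists>C>0. \<forall>n\<ge>2. \<forall>(score :: bool list \<Rightarrow> bool list set \<Rightarrow> real) rk.
              diversity_favouring n score (inner_strings n) \<and> valid_ranking n score rk \<longrightarrow>
              expected_time n Harmonic rk \<le> ennreal (C * real n ^ 2 * ln (real n))"
  proof (intro exI[of _ "108"] conjI allI impI)
    fix n :: nat and score :: "bool list \<Rightarrow> bool list set \<Rightarrow> real" and rk
    assume n2: "2 \<le> n" and h: "diversity_favouring n score (inner_strings n) \<and> valid_ranking n score rk"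
    have lnpos: "0 < ln (real n)" using n2 by simp
    have L: "0 < 1 / (12 * ln (real n))" "1 / (12 * ln (real n)) \<le> selb Harmonic n"
    proof -
      show "0 < 1 / (12 * ln (real n))" using lnpos by simp
      have "3 * (1 + ln (real n + 1)) \<le> 12 * ln (real n)" using ln_bound[OF n2] by simp
      moreover have "0 < 3 * (1 + ln (real n + 1))" by (simp add: add_pos_nonneg)
      ultimately have "1 / (12 * ln (real n)) \<le> 1 / (3 * (1 + ln (real n + 1)))"
        by (intro divide_left_mono) auto
      then show "1 / (12 * ln (real n)) \<le> selb Harmonic n" by (simp add: selb_def)
    qed
    have "expected_time n Harmonic rk \<le> ennreal (real (2 * n + 1) / (selb Harmonic n * (exp (-1) / real n)))"
      using exp_time_bound[OF n2 _ _ refl] h by blast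
    also have "\<dots> \<le> ennreal (9 * real n ^ 2 / (1 / (12 * ln (real n))))"
      by (rule ennreal_leI[OF final_real[OF n2 L]])
    also have "9 * real n ^ 2 / (1 / (12 * ln (real n))) = 108 * real n ^ 2 * ln (real n)" by simp
    finally show "expected_time n Harmonic rk \<le> ennreal (108 * real n ^ 2 * ln (real n))" .
  qed simp
qed

end
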